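(* Let $q$ be a prime power, let $\alpha$ be a primitive element of $\mathbb{F}_{q^n}$, and let $\mathcal{F}$ be a flag on $\mathbb{F}_{q^n}$ whose best friend is the subfield $\mathbb{F}_{q^m}$. Let $\beta\in\mathbb{F}_{q^n}^*$ and write $\langle\beta\rangle=\langle\alpha^l\rangle$ with $l$ a divisor of $q^n-1$. If $\mathrm{Orb}_\beta(\mathcal{F})$ is an optimum distance flag code and $t$ is a dimension in the type vector of $\mathcal{F}$, then $m$ divides $t$ and $$\frac{\mathrm{lcm}\left(l,\frac{q^n-1}{q^m-1}\right)}{l}\le\begin{cases}\left\lfloor\frac{q^n-1}{q^t-1}\right\rfloor & \text{if } 2t\le n,\\[4pt] \left\lfloor\frac{q^n-1}{q^{n-t}-1}\right\rfloor & \text{if } 2t>n.\end{cases}$$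
   Context: A flag of type $(t_1,\ldots,t_r)$ on $\mathbb{F}_{q^n}$ is a sequence $(\mathcal{F}_1,\ldots,\mathcal{F}_r)$ of $\mathbb{F}_q$-subspaces with $\{0\}\subsetneq\mathcal{F}_1\subsetneq\cdots\subsetneq\mathcal{F}_r\subsetneq\mathbb{F}_{q^n}$ and $\dim_{\mathbb{F}_q}\mathcal{F}_i=t_i$. For $\beta\in\mathbb{F}_{q^n}^*$ of multiplicative order $|\beta|$, $\mathcal{U}\beta=\{u\beta:u\in\mathcal{U}\}$, $\mathcal{F}\beta=(\mathcal{F}_1\beta,\ldots,\mathcal{F}_r\beta)$ and $\mathrm{Orb}_\beta(\mathcal{F})=\{\mathcal{F}\beta^j:0\le j\le|\beta|-1\}$. A subfield $\mathbb{F}_{q^m}$ is a friend of $\mathcal{F}$ if every $\mathcal{F}_i$ is an $\mathbb{F}_{q^m}$-vector space; the best friend is the largest friend. Subspace distance $d_S(\mathcal{U},\mathcal{V})=\dim(\mathcal{U}+\mathcal{V})-\dim(\mathcal{U}\cap\mathcal{V})$; flag distance $d_f(\mathcal{F},\mathcal{F}')=\sum_i d_S(\mathcal{F}_i,\mathcal{F}'_i)$; the minimum distance of a set of flags is the minimum over distinct pairs ($0$ for a single flag). A set of flags of type $(t_1,\ldots,t_r)$ on $\mathbb{F}_{q^n}$ is an optimum distance flag code if its minimum distance equals $2\left(\sum_{t_i\le\lfloor n/2\rfloor}t_i+\sum_{t_i>\lfloor n/2\rfloor}(n-t_i)\right)$. *)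

theory Defs
  imports "HOL-Algebra.Embedded_Algebras" "HOL-Computational_Algebra.Primes"
begin

text \<open>Throughout, R is the finite field F_{q^n} (a HOL-Algebra ring record) and
  K is its subfield F_q.\<close>

definition fq_subspace :: "'a set \<Rightarrow> ('a, 'b) ring_scheme \<Rightarrow> 'a set \<Rightarrow> bool" where
  "fq_subspace K R U \<longleftrightarrow> subalgebra K U R"

definition sdim :: "'a set \<Rightarrow> ('a, 'b) ring_scheme \<Rightarrow> 'a set \<Rightarrow> nat" where
  "sdim K R U = ring.dim R K U"

definition is_flag :: "'a set \<Rightarrow> ('a, 'b) ring_scheme \<Rightarrow> 'a set list \<Rightarrow> bool" where
  "is_flag K R Fl \<longleftrightarrow>
     (\<forall>i < length Fl. fq_subspace K R (Fl ! i)) \<and>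
     (\<forall>i < length Fl. \<forall>j < length Fl. i < j \<longrightarrow> Fl ! i \<subset> Fl ! j) \<and>
     (\<forall>i < length Fl. {\<zero>\<^bsub>R\<^esub>} \<subset> Fl ! i \<and> Fl ! i \<subset> carrier R)"

definition flag_type :: "'a set \<Rightarrow> ('a, 'b) ring_scheme \<Rightarrow> 'a set list \<Rightarrow> nat list" where
  "flag_type K R Fl = map (sdim K R) Fl"

definition is_friend :: "'a set \<Rightarrow> ('a, 'b) ring_scheme \<Rightarrow> 'a set list \<Rightarrow> 'a set \<Rightarrow> bool" where
  "is_friend K R Fl L \<longleftrightarrow> subfield L R \<and> K \<subseteq> L \<and> (\<forall>U \<in> set Fl. subalgebra L U R)"

definition is_best_friend :: "'a set \<Rightarrow> ('a, 'b) ring_scheme \<Rightarrow> 'a set list \<Rightarrow> 'a set \<Rightarrow> bool" where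
  "is_best_friend K R Fl L \<longleftrightarrow> is_friend K R Fl L \<and>
     (\<forall>L'. is_friend K R Fl L' \<longrightarrow> card L' \<le> card L)"

definition subspace_dist :: "'a set \<Rightarrow> ('a, 'b) ring_scheme \<Rightarrow> 'a set \<Rightarrow> 'a set \<Rightarrow> nat" where
  "subspace_dist K R U V = sdim K R (U <+>\<^bsub>R\<^esub> V) - sdim K R (U \<inter> V)"

definition flag_dist :: "'a set \<Rightarrow> ('a, 'b) ring_scheme \<Rightarrow> 'a set list \<Rightarrow> 'a set list \<Rightarrow> nat" where
  "flag_dist K R F1 F2 = (\<Sum>i < length F1. subspace_dist K R (F1 ! i) (F2 ! i))"

definition min_dist :: "'a set \<Rightarrow> ('a, 'b) ring_scheme \<Rightarrow> 'a set list set \<Rightarrow> nat" where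
  "min_dist K R C = (if card C \<le> 1 then 0
      else Min {flag_dist K R F1 F2 | F1 F2. F1 \<in> C \<and> F2 \<in> C \<and> F1 \<noteq> F2})"

definition optimum_distance :: "'a set \<Rightarrow> ('a, 'b) ring_scheme \<Rightarrow> nat \<Rightarrow> nat list \<Rightarrow> 'a set list set \<Rightarrow> bool" where
  "optimum_distance K R n ts C \<longleftrightarrow>
     (\<forall>Fl \<in> C. is_flag K R Fl \<and> flag_type K R Fl = ts) \<and>
     min_dist K R C = 2 * ((\<Sum>i < length ts. if ts ! i \<le> n div 2 then ts ! i else 0)
                         + (\<Sum>i < length ts. if ts ! i > n div 2 then n - ts ! i else 0))"

definition mult_order :: "('a, 'b) ring_scheme \<Rightarrow> 'a \<Rightarrow> nat" where
  "mult_order R b = (LEAST k. 0 < k \<and> b [^]\<^bsub>R\<^esub> k = \<one>\<^bsub>R\<^esub>)"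

definition scale_flag :: "('a, 'b) ring_scheme \<Rightarrow> 'a set list \<Rightarrow> 'a \<Rightarrow> 'a set list" where
  "scale_flag R Fl b = map (\<lambda>U. (\<lambda>u. u \<otimes>\<^bsub>R\<^esub> b) ` U) Fl"

definition orbit_flag :: "('a, 'b) ring_scheme \<Rightarrow> 'a set list \<Rightarrow> 'a \<Rightarrow> 'a set list set" where
  "orbit_flag R Fl b = {scale_flag R Fl (b [^]\<^bsub>R\<^esub> j) | j. j < mult_order R b}"

definition primitive_element :: "('a, 'b) ring_scheme \<Rightarrow> 'a \<Rightarrow> bool" where
  "primitive_element R a \<longleftrightarrow> a \<in> carrier R - {\<zero>\<^bsub>R\<^esub>} \<and>
     (\<forall>x \<in> carrier R - {\<zero>\<^bsub>R\<^esub>}. \<exists>k::nat. x = a [^]\<^bsub>R\<^esub> k)"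

definition cyc :: "('a, 'b) ring_scheme \<Rightarrow> 'a \<Rightarrow> 'a set" where
  "cyc R b = {b [^]\<^bsub>R\<^esub> (k::nat) | k. True}"

end

theory Submission
  imports Defs Complex_Main "HOL-Algebra.Multiplicative_Group"
begin


lemma cs_card:
  fixes f :: "'a \<Rightarrow> real"
  assumes "finite I"
  shows "(\<Sum>i\<in>I. f i)^2 \<le> real (card I) * (\<Sum>i\<in>I. (f i)^2)"
proof -
  let ?S = "\<Sum>i\<in>I. f i" and ?Q = "\<Sum>i\<in>I. (f i)^2"
  have "0 \<le> (\<Sum>i\<in>I. \<Sum>j\<in>I. (f i - f j)^2)" by (intro sum_nonneg) auto
  also have "... = (\<Sum>i\<in>I. \<Sum>j\<in>I. ((f i)^2 + (f j)^2 - 2 * (f i * f j)))"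
    by (simp add: power2_diff mult.assoc)
  also have "... = (\<Sum>i\<in>I. real (card I) * (f i)^2 + ?Q - 2 * (f i * ?S))"
  proof (rule sum.cong[OF refl])
    fix i assume "i \<in> I"
    show "(\<Sum>j\<in>I. ((f i)^2 + (f j)^2 - 2 * (f i * f j))) = real (card I) * (f i)^2 + ?Q - 2 * (f i * ?S)"
      by (simp add: sum.distrib sum_subtractf sum_distrib_left)
  qed
  also have "... = real (card I) * ?Q + real (card I) * ?Q - 2 * (?S * ?S)"
  proof -
    have a: "(\<Sum>i\<in>I. f i * ?S) = ?S * ?S" by (rule sum_distrib_right[symmetric])
    have b: "(\<Sum>i\<in>I. 2 * (f i * ?S)) = 2 * (?S * ?S)" by (simp only: a flip: sum_distrib_left)
    have c: "(\<Sum>i\<in>I. real (card I) * (f i)^2) = real (card I) * ?Q" by (rule sum_distrib_left[symmetric])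
    have d: "(\<Sum>i\<in>I. ?Q) = real (card I) * ?Q" by simp
    show ?thesis by (simp only: sum.distrib sum_subtractf b c d)
  qed
  finally show ?thesis by (simp add: power2_eq_square)
qed

lemma sum_ind_card:
  assumes "finite V" "A \<subseteq> V"
  shows "(\<Sum>v\<in>V. (if v \<in> A then 1 else 0 :: real)) = real (card A)"
proof -
  have "(\<Sum>v\<in>V. (if v \<in> A then 1 else 0 :: real)) = (\<Sum>v\<in>V \<inter> A. 1)"
    using assms(1) by (simp add: sum.If_cases Int_def)
  also have "V \<inter> A = A" using assms(2) by blast
  finally show ?thesis by simp
qed

lemma second_moment:
  fixes A :: "nat \<Rightarrow> 'a set" and V :: "'a set"
  assumes fin: "finite V" and sub: "\<And>j. j < c \<Longrightarrow> A j \<subseteq> V"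
    and ca: "\<And>j. j < c \<Longrightarrow> card (A j) = a"
    and cb: "\<And>i j. i < c \<Longrightarrow> j < c \<Longrightarrow> i \<noteq> j \<Longrightarrow> card (A i \<inter> A j) \<le> b"
  shows "(real c * real a)^2 \<le> real (card V) * (real c * a + real c * (real c - 1) * b)"
proof -
  define X where "X v = (\<Sum>j<c. (if v \<in> A j then 1 else 0 :: real))" for v
  have S1: "(\<Sum>v\<in>V. X v) = real c * real a"
  proof -
    have "(\<Sum>v\<in>V. X v) = (\<Sum>j<c. \<Sum>v\<in>V. (if v \<in> A j then 1 else 0 :: real))"
      unfolding X_def by (rule sum.swap)
    also have "... = (\<Sum>j<c. real a)"
      by (rule sum.cong[OF refl]) (simp add: sum_ind_card[OF fin sub] ca)
    finally show ?thesis by simp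
  qed
  have S2: "(\<Sum>v\<in>V. (X v)^2) \<le> real c * a + real c * (real c - 1) * b"
  proof -
    have sq: "(X v)^2 = (\<Sum>i<c. \<Sum>j<c. (if v \<in> A i \<inter> A j then 1 else 0 :: real))" for v
      unfolding X_def power2_eq_square sum_product by (rule sum.cong[OF refl], rule sum.cong[OF refl]) auto
    have "(\<Sum>v\<in>V. (X v)^2) = (\<Sum>i<c. \<Sum>j<c. \<Sum>v\<in>V. (if v \<in> A i \<inter> A j then 1 else 0 :: real))"
      unfolding sq by (simp add: sum.swap[of _ V])
    also have "... = (\<Sum>i<c. \<Sum>j<c. real (card (A i \<inter> A j)))"
    proof (intro sum.cong[OF refl])
      fix i j assume "i \<in> {..<c}" "j \<in> {..<c}"
      hence "A i \<inter> A j \<subseteq> V" using sub by blast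
      from sum_ind_card[OF fin this] show "(\<Sum>v\<in>V. (if v \<in> A i \<inter> A j then 1 else 0 :: real)) = real (card (A i \<inter> A j))" .
    qed
    also have "... \<le> (\<Sum>i<c. \<Sum>j<c. (real b + (if i = j then real a - real b else 0)))"
    proof (intro sum_mono)
      fix i j assume "i \<in> {..<c}" "j \<in> {..<c}"
      thus "real (card (A i \<inter> A j)) \<le> real b + (if i = j then real a - real b else 0)"
        using cb[of i j] ca[of i] by auto
    qed
    also have "... = (\<Sum>i<c. real c * b + (real a - real b))"
      by (rule sum.cong[OF refl]) (simp add: sum.distrib)
    also have "... = real c * a + real c * (real c - 1) * b"
      by (simp add: algebra_simps)
    finally show ?thesis .
  qed
  have "(real c * real a)^2 \<le> real (card V) * (\<Sum>v\<in>V. (X v)^2)"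
    using cs_card[OF fin, of X] S1 by simp
  also have "... \<le> real (card V) * (real c * a + real c * (real c - 1) * b)"
    using S2 by (intro mult_left_mono) auto
  finally show ?thesis .
qed

lemma arithA:
  fixes c a N :: nat
  assumes a: "a \<ge> 1" and h: "(real c * real a)^2 \<le> real N * (real c * a + real c * (real c - 1) * 0)"
  shows "c \<le> N div a"
proof (cases "c = 0")
  case True thus ?thesis by simp
next
  case False
  hence pos: "real c * real a > 0" using a by simp
  from h have "(real c * real a) * (real c * real a) \<le> real N * (real c * real a)"
    by (simp add: power2_eq_square)
  hence "real c * real a \<le> real N" using pos by (meson mult_le_cancel_right_pos)
  hence "c * a \<le> N" by (metis of_nat_le_iff of_nat_mult)
  thus ?thesis using a by (simp add: less_eq_div_iff_mult_less_eq)
qed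

lemma arithB:
  fixes c x y :: nat
  assumes x: "x \<ge> 1" and y: "y \<ge> 2"
    and h: "(real c * real (x*y-1))^2 \<le> real (x*y*y-1) * (real c * real (x*y-1) + real c * (real c - 1) * real (x-1))"
  shows "c \<le> (x*y*y-1) div (y-1)"
proof (cases "c = 0")
  case True thus ?thesis by simp
next
  case False
  have xy: "x * y \<ge> 1" "x*y*y \<ge> 1" using x y by (simp_all add: one_le_mult_iff)
  define X Y C where "X = real x" "Y = real y" "C = real c"
  have r: "real (x*y-1) = X*Y - 1" "real (x*y*y-1) = X*Y*Y - 1" "real (x-1) = X - 1"
    using xy x unfolding X_Y_C_def by (simp_all add: of_nat_diff)
  have Cp: "C > 0" using False unfolding X_Y_C_def by simp
  have Xp: "X \<ge> 1" "Y \<ge> 2" using x y unfolding X_Y_C_def by simp_all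
  from h have h1: "C * (C * (X*Y-1)^2) \<le> C * ((X*Y*Y-1) * ((X*Y-1) + (C - 1) * (X-1)))"
    unfolding r X_Y_C_def[symmetric] by (simp add: power2_eq_square algebra_simps)
  hence h2: "C * (X*Y-1)^2 \<le> (X*Y*Y-1) * ((X*Y-1) + (C - 1) * (X-1))"
    using Cp by simp
  have e: "(X*Y*Y-1) * ((X*Y-1) + (C - 1) * (X-1)) - C * (X*Y-1)^2
      = X * (Y - 1) * ((X*Y*Y-1) - C * (Y - 1))"
    by (simp add: power2_eq_square algebra_simps)
  have "X * (Y - 1) * ((X*Y*Y-1) - C * (Y - 1)) \<ge> 0" using h2 e by linarith
  moreover have "X * (Y - 1) > 0" using Xp by simp
  ultimately have "(X*Y*Y-1) - C * (Y - 1) \<ge> 0"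
    by (simp add: zero_le_mult_iff)
  hence "C * (Y - 1) \<le> X*Y*Y-1" by simp
  hence "real (c * (y - 1)) \<le> real (x*y*y-1)" using r y unfolding X_Y_C_def by (simp add: of_nat_diff)
  hence "c * (y - 1) \<le> x*y*y-1" by linarith
  thus ?thesis using y by (simp add: less_eq_div_iff_mult_less_eq)
qed

lemma pow_minus_one_dvd:
  fixes q :: nat
  assumes "q \<ge> 1"
  shows "q ^ m - 1 dvd q ^ (m * k) - 1"
proof -
  have "(int q ^ m) ^ k - 1 = (int q ^ m - 1) * (\<Sum>i<k. (int q ^ m)^i)" by (rule power_diff_1_eq)
  hence "int q ^ m - 1 dvd (int q ^ m) ^ k - 1" by simp
  moreover have "int (q ^ m - 1) = int q ^ m - 1" using assms by (simp add: of_nat_diff)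
  moreover have "int (q ^ (m * k) - 1) = (int q ^ m) ^ k - 1" using assms by (simp add: of_nat_diff power_mult)
  ultimately have "int (q ^ m - 1) dvd int (q ^ (m * k) - 1)" by simp
  thus ?thesis by (simp only: int_dvd_int_iff)
qed



context ring begin

lemma card_dimension:
  assumes d: "dimension d K E" and K: "subfield K R" and fin: "finite (carrier R)"
  shows "card E = card K ^ d"
proof -
  obtain Us where Us: "set Us \<subseteq> carrier R" "independent K Us" "length Us = d" "Span K Us = E"
    using exists_base[OF K d] by blast
  let ?A = "{Ks. set Ks \<subseteq> K \<and> length Ks = d}"
  have eq: "E = (\<lambda>Ks. combine Ks Us) ` ?A"
    using Span_eq_combine_set_length_version[OF K Us(1)] Us(3,4) by auto
  have inj: "inj_on (\<lambda>Ks. combine Ks Us) ?A"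
  proof (rule inj_onI)
    fix Ks Ks' assume a: "Ks \<in> ?A" "Ks' \<in> ?A" and h: "combine Ks Us = combine Ks' Us"
    have "combine Ks Us \<in> Span K Us" using eq a Us(4) by auto
    from unique_decomposition[OF K Us(2) this] a h Us(3) show "Ks = Ks'" by auto
  qed
  have finK: "finite K" using subfieldE(3)[OF K] fin finite_subset by blast
  have "card E = card ?A" using eq card_image[OF inj] by simp
  also have "... = card K ^ d" using card_lists_length_eq[OF finK] by simp
  finally show ?thesis .
qed

lemma finite_subalgebra_fd:
  assumes K: "subfield K R" and V: "subalgebra K V R" and fin: "finite V"
  shows "finite_dimension K V"
proof -
  define S where "S = { Us. set Us \<subseteq> V \<and> independent K Us }"
  have "length ` S \<subseteq> {..card V}"
  proof
    fix k assume "k \<in> length ` S"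
    then obtain Us where "set Us \<subseteq> V" "independent K Us" "k = length Us" unfolding S_def by auto
    hence "k = card (set Us)" using independent_distinct[OF K] distinct_card by metis
    thus "k \<in> {..card V}" using card_mono[OF fin \<open>set Us \<subseteq> V\<close>] by simp
  qed
  moreover have "[] \<in> S"
    unfolding S_def by simp
  hence "length ` S \<noteq> {}" by blast
  ultimately obtain m where m: "m \<in> length ` S" and greatest: "\<And>k. k \<in> length ` S \<Longrightarrow> k \<le> m"
    by (meson Max_ge Max_in finite_atMost rev_finite_subset)
  then obtain Us where Us: "set Us \<subseteq> V" "independent K Us" "m = length Us"
      unfolding S_def by auto
  have "Span K Us = V"
  proof (rule ccontr)
    assume "\<not> Span K Us = V" then have "Span K Us \<subset> V"
      using subalgebra_Span_incl[OF K V Us(1)] by blast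
    then obtain v where v:"v \<in> V" "v \<notin> Span K Us"
      by blast
    hence "independent K (v # Us)"
      using independent.li_Cons[OF _ _ Us(2)] subalgebra_in_carrier[OF V] by auto
    hence "(v # Us) \<in> S"
      unfolding S_def using Us(1) v(1) by auto
    hence "length (v # Us) \<le> m"
      using greatest by blast
    moreover have "length (v # Us) = Suc m"
      using Us(3) by auto
    ultimately show False by simp
  qed
  thus ?thesis
    using finite_dimensionI[OF dimension_independent[OF Us(2)]] by simp
qed

lemma card_subalgebra:
  assumes K: "subfield K R" and V: "subalgebra K V R" and fin: "finite (carrier R)"
  shows "card V = card K ^ dim K V"
proof -
  have "finite V" using subalgebra_in_carrier[OF V] fin finite_subset by blast
  hence "finite_dimension K V" using finite_subalgebra_fd[OF K V] by simp
  from finite_dimensionE[OF K this] have "dimension (dim K V) K V" by (simp add: over_def)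
  from card_dimension[OF this K fin] show ?thesis .
qed

lemma subalg_props:
  assumes "subalgebra K V R"
  shows "V \<subseteq> carrier R" "\<zero> \<in> V" "\<And>u v. u \<in> V \<Longrightarrow> v \<in> V \<Longrightarrow> u \<oplus> v \<in> V"
    "\<And>u. u \<in> V \<Longrightarrow> \<ominus> u \<in> V" "\<And>k v. k \<in> K \<Longrightarrow> v \<in> V \<Longrightarrow> k \<otimes> v \<in> V"
proof -
  interpret A: additive_subgroup V R using additive_subgroup.intro[OF subalgebra.axioms(1)[OF assms]] .
  show "V \<subseteq> carrier R" "\<zero> \<in> V" "\<And>u v. u \<in> V \<Longrightarrow> v \<in> V \<Longrightarrow> u \<oplus> v \<in> V"
    "\<And>u. u \<in> V \<Longrightarrow> \<ominus> u \<in> V" by (auto simp: A.a_subset)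
  show "\<And>k v. k \<in> K \<Longrightarrow> v \<in> V \<Longrightarrow> k \<otimes> v \<in> V" using subalgebra.smult_closed[OF assms] by blast
qed

lemma subalgI:
  assumes "V \<subseteq> carrier R" "\<zero> \<in> V" "\<And>u v. u \<in> V \<Longrightarrow> v \<in> V \<Longrightarrow> u \<oplus> v \<in> V"
    "\<And>u. u \<in> V \<Longrightarrow> \<ominus> u \<in> V" "\<And>k v. k \<in> K \<Longrightarrow> v \<in> V \<Longrightarrow> k \<otimes> v \<in> V"
  shows "subalgebra K V R"
proof (rule subalgebra.intro)
  show "subgroup V (add_monoid R)"
    by (rule add.subgroupI) (use assms in \<open>auto simp: a_inv_def[symmetric]\<close>)
  show "subalgebra_axioms K V R" unfolding subalgebra_axioms_def using assms(5) by blast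
qed

end

context field begin

lemma scale_subalg:
  assumes V: "subalgebra K V R" and K: "K \<subseteq> carrier R" and b: "b \<in> carrier R" "b \<noteq> \<zero>"
  shows "subalgebra K ((\<lambda>u. u \<otimes> b) ` V) R" and "card ((\<lambda>u. u \<otimes> b) ` V) = card V"
proof -
  note P = subalg_props[OF V]
  show "subalgebra K ((\<lambda>u. u \<otimes> b) ` V) R"
  proof (rule subalgI)
    show "(\<lambda>u. u \<otimes> b) ` V \<subseteq> carrier R" using P(1) b by auto
    show "\<zero> \<in> (\<lambda>u. u \<otimes> b) ` V" using P(2) b by (auto intro!: image_eqI[of _ _ \<zero>])
    show "x \<oplus> y \<in> (\<lambda>u. u \<otimes> b) ` V" if hxy: "x \<in> (\<lambda>u. u \<otimes> b) ` V" "y \<in> (\<lambda>u. u \<otimes> b) ` V" for x y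
    proof -
      obtain u v where "u \<in> V" "v \<in> V" "x = u \<otimes> b" "y = v \<otimes> b" using hxy by blast
      moreover have "u \<otimes> b \<oplus> v \<otimes> b = (u \<oplus> v) \<otimes> b" using P(1) b \<open>u \<in> V\<close> \<open>v \<in> V\<close> by (simp add: l_distr subsetD)
      ultimately show ?thesis using P(3) by auto
    qed
    show "\<ominus> x \<in> (\<lambda>u. u \<otimes> b) ` V" if hx: "x \<in> (\<lambda>u. u \<otimes> b) ` V" for x
    proof -
      obtain u where "u \<in> V" "x = u \<otimes> b" using hx by blast
      moreover have "\<ominus> (u \<otimes> b) = (\<ominus> u) \<otimes> b" using P(1) b \<open>u \<in> V\<close> by (simp add: l_minus subsetD)
      ultimately show ?thesis using P(4) by auto
    qed
    show "k \<otimes> x \<in> (\<lambda>u. u \<otimes> b) ` V" if hx: "k \<in> K" "x \<in> (\<lambda>u. u \<otimes> b) ` V" for k x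
    proof -
      obtain u where "u \<in> V" "x = u \<otimes> b" using hx by blast
      moreover have "k \<otimes> (u \<otimes> b) = (k \<otimes> u) \<otimes> b" using P(1) b \<open>u \<in> V\<close> K \<open>k \<in> K\<close> by (simp add: m_assoc subsetD)
      ultimately show ?thesis using P(5) \<open>k \<in> K\<close> by auto
    qed
  qed
  have "inj_on (\<lambda>u. u \<otimes> b) V"
    by (rule inj_onI) (use P(1) b in \<open>auto simp: m_rcancel subsetD\<close>)
  thus "card ((\<lambda>u. u \<otimes> b) ` V) = card V" by (rule card_image)
qed

lemma flag_subalg:
  assumes "is_flag K R Fl" "U \<in> set Fl"
  shows "subalgebra K U R"
  using assms unfolding is_flag_def fq_subspace_def by (metis in_set_conv_nth)


lemma stab_in_best_friend:
  assumes fin: "finite (carrier R)" and K: "subfield K R" and flag: "is_flag K R Fl"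
    and bf: "is_best_friend K R Fl L"
    and x: "x \<in> carrier R" and stab: "\<forall>U\<in>set Fl. \<forall>u\<in>U. u \<otimes> x \<in> U"
  shows "x \<in> L"
proof -
  define S where "S = {y \<in> carrier R. \<forall>U\<in>set Fl. \<forall>u\<in>U. u \<otimes> y \<in> U}"
  have Kc: "K \<subseteq> carrier R" using subfieldE(3)[OF K] .
  have UP: "subalgebra K U R" if "U \<in> set Fl" for U using flag_subalg[OF flag that] .
  have Uc: "U \<subseteq> carrier R" if "U \<in> set Fl" for U using subalg_props(1)[OF UP[OF that]] .
  have subS: "subring S R"
  proof (rule subringI)
    show "S \<subseteq> carrier R" unfolding S_def by blast
    have "u \<otimes> \<one> \<in> U" if "U \<in> set Fl" "u \<in> U" for U u
    proof -
      have "u \<in> carrier R" using Uc[OF that(1)] that(2) by blast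
      thus ?thesis using that(2) by simp
    qed
    thus "\<one> \<in> S" unfolding S_def by auto
    show "\<ominus> h \<in> S" if "h \<in> S" for h
    proof -
      have "u \<otimes> (\<ominus> h) \<in> U" if "U \<in> set Fl" "u \<in> U" for U u
      proof -
        have "u \<otimes> (\<ominus> h) = \<ominus> (u \<otimes> h)" using \<open>h \<in> S\<close> Uc[OF that(1)] that(2) S_def by (simp add: r_minus subsetD)
        thus ?thesis using subalg_props(4)[OF UP[OF that(1)]] \<open>h \<in> S\<close> that unfolding S_def by auto
      qed
      thus ?thesis using that unfolding S_def by auto
    qed
    show "h1 \<otimes> h2 \<in> S" if "h1 \<in> S" "h2 \<in> S" for h1 h2
    proof -
      have "u \<otimes> (h1 \<otimes> h2) \<in> U" if "U \<in> set Fl" "u \<in> U" for U u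
      proof -
        have "u \<otimes> (h1 \<otimes> h2) = (u \<otimes> h1) \<otimes> h2" using \<open>h1 \<in> S\<close> \<open>h2 \<in> S\<close> Uc[OF that(1)] that(2) S_def by (simp add: m_assoc subsetD)
        thus ?thesis using \<open>h1 \<in> S\<close> \<open>h2 \<in> S\<close> that unfolding S_def by auto
      qed
      thus ?thesis using that unfolding S_def by auto
    qed
    show "h1 \<oplus> h2 \<in> S" if "h1 \<in> S" "h2 \<in> S" for h1 h2
    proof -
      have "u \<otimes> (h1 \<oplus> h2) \<in> U" if "U \<in> set Fl" "u \<in> U" for U u
      proof -
        have "u \<otimes> (h1 \<oplus> h2) = (u \<otimes> h1) \<oplus> (u \<otimes> h2)" using \<open>h1 \<in> S\<close> \<open>h2 \<in> S\<close> Uc[OF that(1)] that(2) S_def by (simp add: r_distr subsetD)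
        thus ?thesis using subalg_props(3)[OF UP[OF that(1)]] \<open>h1 \<in> S\<close> \<open>h2 \<in> S\<close> that unfolding S_def by auto
      qed
      thus ?thesis using that unfolding S_def by auto
    qed
  qed
  have fieldS: "subfield S R"
  proof (rule subfieldI'[OF subS])
    fix k assume k: "k \<in> S - {\<zero>}"
    have kc: "k \<in> carrier R" "k \<noteq> \<zero>" using k S_def by auto
    have kU: "k \<in> Units R" using kc field_Units by blast
    have "u \<otimes> inv k \<in> U" if hU: "U \<in> set Fl" "u \<in> U" for U u
    proof -
      have finU: "finite U" using Uc[OF hU(1)] fin finite_subset by blast
      have maps: "(\<lambda>w. w \<otimes> k) ` U \<subseteq> U" using k hU(1) S_def by auto
      have inj: "inj_on (\<lambda>w. w \<otimes> k) U"
        by (rule inj_onI) (use Uc[OF hU(1)] kc in \<open>auto simp: m_rcancel subsetD\<close>)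
      have "(\<lambda>w. w \<otimes> k) ` U = U"
        by (rule card_subset_eq[OF finU maps]) (simp add: card_image[OF inj])
      then obtain w where w: "w \<in> U" "u = w \<otimes> k" using hU(2) by force
      have "u \<otimes> inv k = w" using w Uc[OF hU(1)] kc kU by (simp add: m_assoc Units_r_inv subsetD)
      thus ?thesis using w by simp
    qed
    thus "inv k \<in> S" unfolding S_def using kU by auto
  qed
  have friend: "is_friend K R Fl S" unfolding is_friend_def
  proof (intro conjI ballI)
    show "subfield S R" by (rule fieldS)
    show "K \<subseteq> S"
    proof
      fix k assume k: "k \<in> K"
      have "u \<otimes> k \<in> U" if "U \<in> set Fl" "u \<in> U" for U u
      proof -
        have "u \<in> carrier R" "k \<in> carrier R" using Uc[OF that(1)] that(2) k Kc by blast+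
        hence "u \<otimes> k = k \<otimes> u" by (simp add: m_comm)
        thus ?thesis using subalg_props(5)[OF UP[OF that(1)] k that(2)] by simp
      qed
      thus "k \<in> S" unfolding S_def using k Kc by auto
    qed
    show "subalgebra S U R" if "U \<in> set Fl" for U
    proof (rule subalgebra.intro)
      show "subgroup U (add_monoid R)" using subalgebra.axioms(1)[OF UP[OF that]] .
      show "subalgebra_axioms S U R"
      proof (rule subalgebra_axioms.intro)
        fix k v assume kv0: "k \<in> S" "v \<in> U"
        hence kv: "k \<in> S \<and> v \<in> U" by simp
        have "v \<in> carrier R" "k \<in> carrier R" using Uc[OF that] kv S_def by auto
        hence "k \<otimes> v = v \<otimes> k" by (simp add: m_comm)
        thus "k \<otimes> v \<in> U" using kv that unfolding S_def by auto
      qed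
    qed
  qed
  have "\<forall>L'. is_friend K R Fl L' \<longrightarrow> card L' \<le> card L" using bf unfolding is_best_friend_def by simp
  hence cardle: "card S \<le> card L" using friend by blast
  have BF: "is_friend K R Fl L" using bf by (simp add: is_best_friend_def)
  have Lsf: "subfield L R" using BF by (simp add: is_friend_def)
  have LU: "\<forall>U\<in>set Fl. subalgebra L U R" using BF by (simp add: is_friend_def)
  have Lc: "L \<subseteq> carrier R" using Lsf by (rule subfieldE(3))
  have LS: "L \<subseteq> S"
  proof
    fix y assume y: "y \<in> L"
    have "u \<otimes> y \<in> U" if hU: "U \<in> set Fl" "u \<in> U" for U u
    proof -
      have sa: "subalgebra L U R" using LU hU(1) by blast
      have yu: "y \<otimes> u \<in> U" by (rule subalgebra.smult_closed[OF sa y hU(2)])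
      have yc: "y \<in> carrier R" using Lc y by blast
      have uc: "u \<in> carrier R" using Uc[OF hU(1)] hU(2) by blast
      show ?thesis using yu m_comm[OF yc uc] by simp
    qed
    moreover have "y \<in> carrier R" using Lc y by blast
    ultimately show "y \<in> S" unfolding S_def by blast
  qed
  have finS: "finite S" unfolding S_def using fin by simp
  have "L = S" by (rule card_seteq[OF finS LS cardle])
  moreover have "x \<in> S" unfolding S_def using x stab by blast
  ultimately show ?thesis by simp
qed

end


context field begin

lemma pow_nz:
  assumes "b \<in> carrier R" "b \<noteq> \<zero>"
  shows "b [^] (k::nat) \<noteq> \<zero>"
proof -
  interpret G: group "mult_of R" by (rule field_mult_group)
  have "b \<in> carrier (mult_of R)" using assms by simp
  hence "b [^]\<^bsub>mult_of R\<^esub> k \<in> carrier (mult_of R)" by (rule G.nat_pow_closed)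
  thus ?thesis by (simp add: nat_pow_mult_of)
qed

lemma subfield_pow_card:
  assumes fin: "finite (carrier R)" and L: "subfield L R" and x: "x \<in> L" "x \<noteq> \<zero>"
  shows "x [^] (card L - 1) = \<one>"
proof -
  interpret F: field "R \<lparr> carrier := L \<rparr>" using subfield_iff(2)[OF L] .
  interpret G: group "mult_of (R \<lparr> carrier := L \<rparr>)" by (rule F.field_mult_group)
  have xc: "x \<in> carrier (mult_of (R \<lparr> carrier := L \<rparr>))" using x by simp
  have "x [^]\<^bsub>mult_of (R \<lparr> carrier := L \<rparr>)\<^esub> order (mult_of (R \<lparr> carrier := L \<rparr>)) = \<one>\<^bsub>mult_of (R \<lparr> carrier := L \<rparr>)\<^esub>"
    by (rule G.pow_order_eq_1[OF xc])
  moreover have "order (mult_of (R \<lparr> carrier := L \<rparr>)) = card L - 1"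
  proof -
    have "finite L" using fin subfieldE(3)[OF L] finite_subset by blast
    thus ?thesis using F.order_mult_of by (simp add: order_def)
  qed
  ultimately show ?thesis by (simp add: nat_pow_mult_of nat_pow_def)
qed

lemma prim_order:
  assumes fin: "finite (carrier R)" and prim: "primitive_element R a"
  shows "a [^] (k::nat) = \<one> \<longleftrightarrow> (card (carrier R) - 1) dvd k"
proof -
  interpret G: group "mult_of R" by (rule field_mult_group)
  have ac: "a \<in> carrier (mult_of R)" using prim unfolding primitive_element_def by simp
  have finG: "finite (carrier (mult_of R))" using fin by simp
  have oG: "order (mult_of R) = card (carrier R) - 1" using order_mult_of[OF fin] by (simp add: order_def)
  have "G.ord a \<le> card (carrier R) - 1" using G.ord_le_group_order[OF finG ac] oG by simp
  moreover have "card (carrier R) - 1 \<le> G.ord a"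
  proof -
    have "carrier (mult_of R) \<subseteq> {a [^]\<^bsub>mult_of R\<^esub> x | x. x \<in> (UNIV :: nat set)}"
      using prim unfolding primitive_element_def by (auto simp: nat_pow_mult_of)
    also have "... = {a [^]\<^bsub>mult_of R\<^esub> x | x. x \<in> {0 .. G.ord a - 1}}"
      by (rule G.ord_elems[OF finG ac])
    also have "... = (\<lambda>x. a [^]\<^bsub>mult_of R\<^esub> x) ` {0 .. G.ord a - 1}" by blast
    finally have "card (carrier (mult_of R)) \<le> card {0 .. G.ord a - 1}"
      using card_image_le[of "{0 .. G.ord a - 1}"] card_mono by (meson finite_atLeastAtMost order_trans finite_imageI)
    also have "... = G.ord a" using G.ord_ge_1[OF finG ac] by simp
    finally show ?thesis using oG by (simp add: order_def)
  qed
  ultimately have "G.ord a = card (carrier R) - 1" by simp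
  moreover have "a [^]\<^bsub>mult_of R\<^esub> k = \<one>\<^bsub>mult_of R\<^esub> \<longleftrightarrow> G.ord a dvd k" by (rule G.pow_eq_id[OF ac])
  ultimately show ?thesis by (simp add: nat_pow_mult_of)
qed

lemma sdim_card:
  assumes fin: "finite (carrier R)" and K: "subfield K R" and q: "card K = q" "1 < q"
    and V: "subalgebra K V R"
  shows "card V = q ^ sdim K R V"
  using card_subalgebra[OF K V fin] q unfolding sdim_def by simp

lemma dist_bound:
  assumes fin: "finite (carrier R)" and K: "subfield K R" and q: "card K = q" "1 < q"
    and cR: "card (carrier R) = q ^ n"
    and A: "subalgebra K A R" and B: "subalgebra K B R" and cA: "card A = q ^ s" and cB: "card B = q ^ s"
  shows "subspace_dist K R A B \<le> 2 * (if s \<le> n div 2 then s else n - s)"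
    and "subspace_dist K R A B = 2 * (if s \<le> n div 2 then s else n - s) \<Longrightarrow>
           card (A \<inter> B) \<le> q ^ (if 2 * s \<le> n then 0 else 2 * s - n)"
proof -
  have finA: "finite A" using subalg_props(1)[OF A] fin finite_subset by blast
  have finB: "finite B" using subalg_props(1)[OF B] fin finite_subset by blast
  have fdA: "finite_dimension K A" by (rule finite_subalgebra_fd[OF K A finA])
  have fdB: "finite_dimension K B" by (rule finite_subalgebra_fd[OF K B finB])
  have dA: "sdim K R A = s" using sdim_card[OF fin K q A] cA q(2) by simp
  have dB: "sdim K R B = s" using sdim_card[OF fin K q B] cB q(2) by simp
  note SS = sum_space_dim[OF K fdA fdB]
  have subAB: "subalgebra K (A <+>\<^bsub>R\<^esub> B) R" by (rule finite_dimension_imp_subalgebra[OF K SS(1)])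
  have subI: "subalgebra K (A \<inter> B) R" by (rule subalgebra_inter[OF A B])
  define I where "I = sdim K R (A \<inter> B)"
  define S where "S = sdim K R (A <+>\<^bsub>R\<^esub> B)"
  have SI: "S = s + s - I" using SS(2) dA dB unfolding S_def I_def sdim_def over_def by simp
  have "q ^ S \<le> q ^ n"
    using sdim_card[OF fin K q subAB] cR card_mono[OF fin subalg_props(1)[OF subAB]] unfolding S_def by simp
  hence Sn: "S \<le> n" using power_le_imp_le_exp[OF q(2)] by blast
  have "q ^ I \<le> q ^ s"
    using sdim_card[OF fin K q subI] cA card_mono[OF finA, of "A \<inter> B"] unfolding I_def by simp
  hence Is: "I \<le> s" using power_le_imp_le_exp[OF q(2)] by blast
  have dist: "subspace_dist K R A B = 2 * s - 2 * I"
    unfolding subspace_dist_def S_def[symmetric] I_def[symmetric] using SI Is by simp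
  have cI: "card (A \<inter> B) = q ^ I" using sdim_card[OF fin K q subI] unfolding I_def by simp
  show "subspace_dist K R A B \<le> 2 * (if s \<le> n div 2 then s else n - s)"
    using dist SI Sn Is by auto
  assume eq: "subspace_dist K R A B = 2 * (if s \<le> n div 2 then s else n - s)"
  have "I = (if 2 * s \<le> n then 0 else 2 * s - n)"
    using eq dist SI Sn Is by (auto split: if_splits)
  thus "card (A \<inter> B) \<le> q ^ (if 2 * s \<le> n then 0 else 2 * s - n)" using cI by simp
qed

end


context field begin

lemma main:
  assumes fin: "finite (carrier R)"
    and K: "subfield K R" and cK: "card K = q" and cR: "card (carrier R) = q ^ n"
    and prim: "primitive_element R alpha"
    and flag: "is_flag K R Fl"
    and bf: "is_best_friend K R Fl L" and cL: "card L = q ^ m"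
    and beta: "beta \<in> carrier R - {\<zero>}"
    and ldvd: "l dvd q ^ n - 1" and cyc: "cyc R beta = cyc R (alpha [^] l)"
    and opt: "optimum_distance K R n (flag_type K R Fl) (orbit_flag R Fl beta)"
    and tin: "t \<in> set (flag_type K R Fl)"
  shows "m dvd t \<and>
    lcm l ((q ^ n - 1) div (q ^ m - 1)) div l \<le>
      (if 2 * t \<le> n then (q ^ n - 1) div (q ^ t - 1) else (q ^ n - 1) div (q ^ (n - t) - 1))"
proof -
  have Kc: "K \<subseteq> carrier R" by (rule subfieldE(3)[OF K])
  have finK: "finite K" using Kc fin finite_subset by blast
  have "{\<zero>, \<one>} \<subseteq> K" using subringE(2,3)[OF subfieldE(1)[OF K]] by blast
  hence "card {\<zero>, \<one>} \<le> card K" using card_mono[OF finK] by blast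
  hence q2: "1 < q" using cK by simp
  note qq = cK q2
  have cardV: "card V = q ^ sdim K R V" if "subalgebra K V R" for V
    by (rule sdim_card[OF fin K qq that])
  obtain i where i: "i < length Fl" "t = sdim K R (Fl ! i)"
    using tin unfolding flag_type_def by (auto simp: in_set_conv_nth)
  define U where "U = Fl ! i"
  have UinFl: "U \<in> set Fl" using i(1) unfolding U_def by simp
  have UK: "subalgebra K U R" by (rule flag_subalg[OF flag UinFl])
  have BF: "is_friend K R Fl L" using bf by (simp add: is_best_friend_def)
  have Lsf: "subfield L R" using BF by (simp add: is_friend_def)
  have KL: "K \<subseteq> L" using BF by (simp add: is_friend_def)
  have LU: "\<forall>U\<in>set Fl. subalgebra L U R" using BF by (simp add: is_friend_def)
  have Lc: "L \<subseteq> carrier R" using Lsf by (rule subfieldE(3))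
  have KLalg: "subalgebra K L R"
  proof (rule subalgI)
    note P = subringE[OF subfieldE(1)[OF Lsf]]
    show "L \<subseteq> carrier R" by (rule Lc)
    show "\<zero> \<in> L" by (rule P(2))
    show "u \<oplus> v \<in> L" if "u \<in> L" "v \<in> L" for u v using P(7) that by blast
    show "\<ominus> u \<in> L" if "u \<in> L" for u using P(5) that by blast
    show "k \<otimes> v \<in> L" if "k \<in> K" "v \<in> L" for k v using P(6) that KL by blast
  qed
  have finL: "finite L" using Lc fin finite_subset by blast
  have fdKL: "finite_dimension K L" by (rule finite_subalgebra_fd[OF K KLalg finL])
  have dimL: "sdim K R L = m" using cardV[OF KLalg] cL q2 by simp
  have mdvd: "m dvd sdim K R V" if "subalgebra L V R" "subalgebra K V R" for V
  proof -
    have "finite V" using subalg_props(1)[OF that(1)] fin finite_subset by blast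
    hence fdLV: "finite_dimension L V" by (rule finite_subalgebra_fd[OF Lsf that(1)])
    have "(dim over K) V = (dim over K) L * (dim over L) V"
      by (rule telescopic_base_dim(2)[OF K Lsf fdKL fdLV])
    thus ?thesis using dimL unfolding sdim_def over_def by simp
  qed
  have mt: "m dvd t" using mdvd[of U] LU UinFl UK i(2) unfolding U_def by simp
  have "m dvd sdim K R (carrier R)"
    using mdvd[of "carrier R"] carrier_is_subalgebra[OF Lc] carrier_is_subalgebra[OF Kc] by simp
  moreover have "sdim K R (carrier R) = n" using cardV[OF carrier_is_subalgebra[OF Kc]] cR q2 by simp
  ultimately have mn: "m dvd n" by simp
  define N where "N = q ^ n - 1"
  define M where "M = q ^ m - 1"
  define N' where "N' = N div M"
  define c where "c = lcm l N' div l"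
  have "q ^ n \<ge> 2" using cR card_mono[OF fin, of "{\<zero>, \<one>}"] by simp
  hence Npos: "N > 0" unfolding N_def by simp
  have n1: "n \<ge> 1" using \<open>q ^ n \<ge> 2\<close> by (cases n) auto
  have "q ^ m \<ge> q" using cL card_mono[OF finL KL] cK by simp
  hence Mpos: "M > 0" unfolding M_def using q2 by simp
  have MN: "M dvd N" unfolding M_def N_def using pow_minus_one_dvd[of q m "n div m"] q2 mn by simp
  have N'pos: "N' > 0" using MN Npos Mpos unfolding N'_def by (auto elim!: dvdE)
  have lpos: "l > 0" using ldvd Npos unfolding N_def by (auto intro: ccontr)
  have lc: "lcm l N' = l * c" unfolding c_def by simp
  have cpos: "c \<ge> 1" using lc lpos N'pos by (metis lcm_eq_0_iff less_one mult_0_right not_le neq0_conv)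
  have bc: "beta \<in> carrier R" "beta \<noteq> \<zero>" using beta by auto
  have ac: "alpha \<in> carrier R" using prim unfolding primitive_element_def by simp
  have aord: "alpha [^] k = \<one> \<longleftrightarrow> N dvd k" for k :: nat
    using prim_order[OF fin prim] cR unfolding N_def by simp
  have "beta \<in> cyc R beta" unfolding cyc_def by (rule CollectI, rule exI[of _ 1]) (simp add: bc)
  then obtain a where a: "beta = (alpha [^] l) [^] (a::nat)" using cyc unfolding cyc_def by auto
  have "alpha [^] l \<in> cyc R (alpha [^] l)" unfolding cyc_def by (rule CollectI, rule exI[of _ 1]) (simp add: ac)
  hence "alpha [^] l \<in> cyc R beta" using cyc by simp
  then obtain b where b: "alpha [^] l = beta [^] (b::nat)" unfolding cyc_def by auto
  have key: "c dvd d" if "beta [^] d \<in> L" for d :: nat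
  proof -
    have "beta [^] d \<noteq> \<zero>" by (rule pow_nz[OF bc])
    hence "(beta [^] d) [^] (card L - 1) = \<one>" by (rule subfield_pow_card[OF fin Lsf that])
    hence bd: "beta [^] (d * M) = \<one>" using cL bc unfolding M_def by (simp add: nat_pow_pow)
    have "alpha [^] (l * (d * M)) = (alpha [^] l) [^] (d * M)" using ac by (simp add: nat_pow_pow)
    also have "... = (beta [^] b) [^] (d * M)" using b by simp
    also have "... = (beta [^] (d * M)) [^] b" using bc by (simp add: nat_pow_pow mult.commute)
    also have "... = \<one>" using bd by simp
    finally have "N dvd l * (d * M)" using aord by simp
    then obtain z where "l * (d * M) = N * z" by (auto elim!: dvdE)
    moreover have "N = N' * M" using MN unfolding N'_def by simp
    ultimately have "l * d * M = N' * z * M" by (simp add: ac_simps)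
    hence "l * d = N' * z" using Mpos by simp
    hence "N' dvd l * d" by simp
    hence "lcm l N' dvd l * d" by (simp add: lcm_least)
    hence "l * c dvd l * d" using lc by simp
    thus ?thesis using lpos by simp
  qed
  have bN: "beta [^] N = \<one>"
  proof -
    have "beta [^] N = alpha [^] (l * a * N)" using a ac by (simp add: nat_pow_pow)
    also have "... = \<one>" using aord by simp
    finally show ?thesis .
  qed
  define mo where "mo = mult_order R beta"
  have mo: "0 < mo \<and> beta [^] mo = \<one>"
    unfolding mo_def mult_order_def by (rule LeastI_ex) (use bN Npos in blast)
  have "c dvd mo" using key[of mo] mo subringE(3)[OF subfieldE(1)[OF Lsf]] by simp
  hence cmo: "c \<le> mo" using mo by (simp add: dvd_imp_le)
  have Uc: "U \<subseteq> carrier R" by (rule subalg_props(1)[OF UK])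
  have cU: "card U = q ^ t" using cardV[OF UK] i(2) unfolding U_def by simp
  have "{\<zero>} \<subset> U" "U \<subset> carrier R" using flag i(1) unfolding is_flag_def U_def by auto
  hence "card {\<zero>} < card U" "card U < card (carrier R)"
    using psubset_card_mono fin finite_subset Uc by (metis, metis)
  hence "q ^ 0 < q ^ t" "q ^ t < q ^ n" using cU cR by auto
  hence "0 < t" "t < n" using power_strict_increasing_iff[OF q2] by blast+
  hence t1: "1 \<le> t" and tn: "t < n" by simp_all
  have goal_c: "c \<le> (if 2 * t \<le> n then N div (q ^ t - 1) else N div (q ^ (n - t) - 1))"
  proof (cases "c = 1")
    case True
    have h1: "q ^ t \<le> q ^ n" "q ^ (n - t) \<le> q ^ n" using tn q2 by (simp_all add: power_increasing)
    have h2: "q ^ 1 \<le> q ^ t" "q ^ 1 \<le> q ^ (n - t)" using tn t1 q2 power_increasing[of 1 _ q] by simp_all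
    have "q ^ t - 1 \<le> N" "q ^ (n - t) - 1 \<le> N" unfolding N_def using h1 by (simp_all add: diff_le_mono)
    moreover have "q ^ t - 1 > 0" "q ^ (n - t) - 1 > 0" using h2 q2 by simp_all
    ultimately have "1 \<le> N div (q ^ t - 1)" "1 \<le> N div (q ^ (n - t) - 1)"
      by (simp_all add: div_greater_zero_iff Suc_le_eq)
    thus ?thesis using True by simp
  next
    case False
    hence c2: "c \<ge> 2" using cpos by simp
    define F where "F j = scale_flag R Fl (beta [^] j)" for j :: nat
    define V where "V j = (\<lambda>u. u \<otimes> beta [^] j) ` U" for j :: nat
    have bjc: "beta [^] j \<in> carrier R" "beta [^] j \<noteq> \<zero>" for j :: nat using bc pow_nz by auto
    have distinct: "F j \<noteq> F k" if jk: "j < k" "k < c" for j k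
    proof
      assume eqF: "F j = F k"
      define g where "g = beta [^] (k - j)"
      have gc: "g \<in> carrier R" unfolding g_def using bc by simp
      have bk: "beta [^] k = beta [^] j \<otimes> g" unfolding g_def using bc jk by (simp add: nat_pow_mult)
      have imgs: "\<forall>W\<in>set Fl. (\<lambda>u. u \<otimes> beta [^] j) ` W = (\<lambda>u. u \<otimes> beta [^] k) ` W"
        using eqF unfolding F_def scale_flag_def by (simp add: map_eq_conv)
      have "\<forall>W\<in>set Fl. \<forall>u\<in>W. u \<otimes> g \<in> W"
      proof (intro ballI)
        fix W u assume W: "W \<in> set Fl" "u \<in> W"
        have Wc: "W \<subseteq> carrier R" by (rule subalg_props(1)[OF flag_subalg[OF flag W(1)]])
        have uc: "u \<in> carrier R" using Wc W(2) by blast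
        have "u \<otimes> beta [^] k \<in> (\<lambda>u. u \<otimes> beta [^] k) ` W" using W(2) by blast
        hence "u \<otimes> beta [^] k \<in> (\<lambda>u. u \<otimes> beta [^] j) ` W" using imgs W(1) by simp
        then obtain w where w: "w \<in> W" "u \<otimes> beta [^] k = w \<otimes> beta [^] j" by blast
        have wc: "w \<in> carrier R" using Wc w(1) by blast
        have "u \<otimes> beta [^] k = u \<otimes> (g \<otimes> beta [^] j)" using bk m_comm[OF bjc(1)[of j] gc] by simp
        also have "... = (u \<otimes> g) \<otimes> beta [^] j" using uc gc bjc(1)[of j] by (simp add: m_assoc)
        finally have "(u \<otimes> g) \<otimes> beta [^] j = w \<otimes> beta [^] j" using w(2) by simp
        hence "u \<otimes> g = w" using m_rcancel[OF bjc(2)[of j] bjc(1)[of j]] uc gc wc by simp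
        thus "u \<otimes> g \<in> W" using w(1) by simp
      qed
      hence "g \<in> L" using stab_in_best_friend[OF fin K flag bf gc] by blast
      hence "c dvd k - j" using key unfolding g_def by blast
      moreover have "0 < k - j" "k - j < c" using jk by simp_all
      ultimately show False by (auto dest: dvd_imp_le)
    qed
    define C where "C = orbit_flag R Fl beta"
    have C_eq: "C = F ` {..<mo}" unfolding C_def orbit_flag_def F_def mo_def by auto
    have FC: "F j \<in> C" if "j < c" for j using that cmo C_eq by auto
    have finC: "finite C" using C_eq by simp
    have "card {F 0, F 1} \<le> card C" using FC c2 finC by (intro card_mono) auto
    hence cardC: "\<not> card C \<le> 1" using distinct[of 0 1] c2 by simp
    define D where "D = 2 * ((\<Sum>i < length (flag_type K R Fl). if flag_type K R Fl ! i \<le> n div 2 then flag_type K R Fl ! i else 0)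
                         + (\<Sum>i < length (flag_type K R Fl). if flag_type K R Fl ! i > n div 2 then n - flag_type K R Fl ! i else 0))"
    have minD: "min_dist K R C = D" using opt unfolding optimum_distance_def C_def D_def by simp
    have Dle: "D \<le> flag_dist K R (F j) (F k)" if "j < c" "k < c" "j \<noteq> k" for j k
    proof -
      let ?DS = "{flag_dist K R F1 F2 | F1 F2. F1 \<in> C \<and> F2 \<in> C \<and> F1 \<noteq> F2}"
      have "?DS \<subseteq> (\<lambda>(x, y). flag_dist K R x y) ` (C \<times> C)" by auto
      hence finDS: "finite ?DS" using finC finite_subset by blast
      have Fjk: "F j \<noteq> F k" using distinct that by (metis linorder_neqE_nat)
      have "flag_dist K R (F j) (F k) \<in> ?DS" using FC that Fjk by blast
      hence "Min ?DS \<le> flag_dist K R (F j) (F k)" using finDS by simp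
      thus ?thesis using minD cardC unfolding min_dist_def by simp
    qed
    have comp: "card (V j \<inter> V k) \<le> q ^ (if 2 * t \<le> n then 0 else 2 * t - n)"
      if jk: "j < c" "k < c" "j \<noteq> k" for j k
    proof -
      define W where "W i' = Fl ! i'" for i'
      define sd where "sd i' = sdim K R (W i')" for i'
      define dist where "dist i' = subspace_dist K R ((\<lambda>u. u \<otimes> beta [^] j) ` W i') ((\<lambda>u. u \<otimes> beta [^] k) ` W i')" for i'
      define e where "e i' = 2 * (if sd i' \<le> n div 2 then sd i' else n - sd i')" for i'
      have WK: "subalgebra K (W i') R" if "i' < length Fl" for i'
        unfolding W_def using flag_subalg[OF flag] that by simp
      have fd: "flag_dist K R (F j) (F k) = (\<Sum>i'<length Fl. dist i')"
        unfolding flag_dist_def F_def scale_flag_def dist_def W_def by simp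
      have DE: "D = (\<Sum>i'<length Fl. e i')"
        unfolding D_def e_def sd_def W_def flag_type_def
        by (simp add: sum_distrib_left flip: sum.distrib) (rule sum.cong[OF refl], simp)
      have le: "dist i' \<le> e i'" if "i' \<in> {..<length Fl}" for i'
      proof -
        have wk: "subalgebra K (W i') R" using WK that by simp
        note S1 = scale_subalg[OF wk Kc bjc[of j]] and S2 = scale_subalg[OF wk Kc bjc[of k]]
        show ?thesis unfolding dist_def e_def
          by (rule dist_bound(1)[OF fin K qq cR S1(1) S2(1)]) (simp_all add: S1(2) S2(2) cardV[OF wk] sd_def)
      qed
      have "(\<Sum>i'<length Fl. e i') \<le> (\<Sum>i'<length Fl. dist i')" using Dle[OF jk] fd DE by simp
      hence eq: "dist i' = e i'" if "i' \<in> {..<length Fl}" for i'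
        using sum_strict_mono_ex1[of "{..<length Fl}" dist e] le that
        by (metis finite_lessThan le_neq_implies_less not_le)
      have Wi: "W i = U" unfolding W_def U_def by simp
      have sdi: "sd i = t" unfolding sd_def Wi using i(2) U_def by simp
      note S1 = scale_subalg[OF UK Kc bjc[of j]] and S2 = scale_subalg[OF UK Kc bjc[of k]]
      have "dist i = e i" using eq i(1) by simp
      hence "subspace_dist K R (V j) (V k) = 2 * (if t \<le> n div 2 then t else n - t)"
        unfolding dist_def e_def Wi sdi V_def .
      moreover have "card ((\<lambda>u. u \<otimes> beta [^] j) ` U) = q ^ t" "card ((\<lambda>u. u \<otimes> beta [^] k) ` U) = q ^ t"
        using S1(2) S2(2) cU by simp_all
      ultimately show ?thesis unfolding V_def
        using dist_bound(2)[OF fin K qq cR S1(1) S2(1)] by blast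
    qed
    define b' where "b' = (if 2 * t \<le> n then 0 else 2 * t - n)"
    define A where "A j = V j - {\<zero>}" for j
    have VK: "subalgebra K (V j) R" for j unfolding V_def by (rule scale_subalg(1)[OF UK Kc bjc])
    have cV: "card (V j) = q ^ t" for j unfolding V_def using scale_subalg(2)[OF UK Kc bjc] cU by simp
    have finV: "finite (V j)" for j using subalg_props(1)[OF VK] fin finite_subset by blast
    have cA: "card (A j) = q ^ t - 1" for j
      unfolding A_def using cV subalg_props(2)[OF VK] finV by simp
    have sA: "A j \<subseteq> carrier R - {\<zero>}" for j unfolding A_def using subalg_props(1)[OF VK] by blast
    have cAA: "card (A j \<inter> A k) \<le> q ^ b' - 1" if "j < c" "k < c" "j \<noteq> k" for j k
    proof -
      have "A j \<inter> A k = (V j \<inter> V k) - {\<zero>}" unfolding A_def by blast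
      moreover have "\<zero> \<in> V j \<inter> V k" using subalg_props(2)[OF VK] by blast
      ultimately have "card (A j \<inter> A k) = card (V j \<inter> V k) - 1" using finV by simp
      thus ?thesis using comp[OF that] unfolding b'_def by simp
    qed
    have cN: "card (carrier R - {\<zero>}) = N" unfolding N_def using cR fin by simp
    have SM: "(real c * real (q ^ t - 1))^2 \<le> real N * (real c * real (q ^ t - 1) + real c * (real c - 1) * real (q ^ b' - 1))"
      using second_moment[of "carrier R - {\<zero>}" c A "q ^ t - 1" "q ^ b' - 1"] fin sA cA cAA cN by simp
    show ?thesis
    proof (cases "2 * t \<le> n")
      case True
      hence "b' = 0" unfolding b'_def by simp
      hence "(real c * real (q ^ t - 1))^2 \<le> real N * (real c * real (q ^ t - 1) + real c * (real c - 1) * 0)"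
        using SM by simp
      moreover have "q ^ t - 1 \<ge> 1" using t1 q2 power_increasing[of 1 t q] by simp
      ultimately have "c \<le> N div (q ^ t - 1)" using arithA by blast
      thus ?thesis using True by simp
    next
      case False
      define x where "x = q ^ (2 * t - n)"
      define y where "y = q ^ (n - t)"
      have xy: "x * y = q ^ t" unfolding x_def y_def using False tn by (simp flip: power_add)
      have xyy: "x * y * y = q ^ n" unfolding xy unfolding y_def using tn by (simp flip: power_add)
      have bb: "q ^ b' = x" unfolding b'_def x_def using False by simp
      have x1: "x \<ge> 1" unfolding x_def using q2 by simp
      have "q ^ 1 \<le> q ^ (n - t)" using q2 tn power_increasing[of 1 "n - t" q] by simp
      hence y2: "y \<ge> 2" unfolding y_def using q2 by simp
      have "(real c * real (x*y-1))^2 \<le> real (x*y*y-1) * (real c * real (x*y-1) + real c * (real c - 1) * real (x-1))"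
      proof -
        have e1: "x*y*y - 1 = N" unfolding N_def using xyy by simp
        have e2: "x*y - 1 = q ^ t - 1" using xy by simp
        have e3: "x - 1 = q ^ b' - 1" using bb by simp
        show ?thesis unfolding e1 e2 e3 by (rule SM)
      qed
      from arithB[OF x1 y2 this] have "c \<le> (x*y*y-1) div (y-1)" .
      hence "c \<le> (q ^ n - 1) div (y - 1)" by (simp only: xyy)
      hence "c \<le> N div (q ^ (n - t) - 1)" unfolding y_def N_def .
      thus ?thesis using False by simp
    qed
  qed
  thus ?thesis using mt unfolding c_def N'_def N_def M_def by simp
qed

end

theorem theorem4p21:
  fixes R :: "('a, 'b) ring_scheme" and K L :: "'a set"
    and q n m l t :: nat and alpha beta :: 'a and Fl :: "'a set list"
  assumes "field R" and "finite (carrier R)"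
    and "\<exists>p k. prime (p::nat) \<and> k > 0 \<and> q = p ^ k"
    and "subfield K R" and "card K = q" and "card (carrier R) = q ^ n"
    and "primitive_element R alpha"
    and "is_flag K R Fl"
    and "is_best_friend K R Fl L" and "card L = q ^ m"
    and "beta \<in> carrier R - {\<zero>\<^bsub>R\<^esub>}"
    and "l dvd q ^ n - 1" and "cyc R beta = cyc R (alpha [^]\<^bsub>R\<^esub> l)"
    and "optimum_distance K R n (flag_type K R Fl) (orbit_flag R Fl beta)"
    and "t \<in> set (flag_type K R Fl)"
  shows "m dvd t \<and>
    lcm l ((q ^ n - 1) div (q ^ m - 1)) div l \<le>
      (if 2 * t \<le> n then (q ^ n - 1) div (q ^ t - 1) else (q ^ n - 1) div (q ^ (n - t) - 1))"
proof -
  interpret field R by (rule assms(1))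
  show ?thesis by (rule main[OF assms(2) assms(4-15)])
qed

end
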